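(* Let $H\ge1$, $m\ge1$ be integers, let $\Phi\in\mathbb{R}^{|\mathcal S|\times d}$ be a feature matrix (row $s$ is $\phi(s)^\top$), and let $\mathcal D\subseteq\mathcal S$ be a fixed set of states such that the submatrix $\Phi_{\mathcal D}$ (rows of $\Phi$ indexed by $\mathcal D$) has rank $d$. Let $\mathcal P\in\{0,1\}^{|\mathcal D|\times|\mathcal S|}$ be the matrix selecting the coordinates in $\mathcal D$ (in the same order as the rows of $\Phi_{\mathcal D}$), and $\mathcal M:=\Phi(\Phi_{\mathcal D}^\top\Phi_{\mathcal D})^{-1}\Phi_{\mathcal D}^\top\mathcal P$. Given $\theta_0\in\mathbb{R}^d$, define iteratively: let $(\mu_{k+1},\nu_{k+1})$ be any pair of stationary randomized policies with $T_{\mu_{k+1},\nu_{k+1}}(T^{H-1}\Phi\theta_k)=T^H\Phi\theta_k$, and let $\theta_{k+1}$ be the least-squares solution $$\theta_{k+1}=\arg\min_\theta\sum_{s\in\mathcal D}\Big((\Phi\theta)(s)-\big(T^m_{\mu_{k+1},\nu_{k+1}}T^{H-1}\Phi\theta_k\big)(s)\Big)^2,$$ so that $\Phi\theta_{k+1}=\mathcal M\,T^m_{\mu_{k+1},\nu_{k+1}}T^{H-1}\Phi\theta_k$. Let $\delta_{FV}:=\|\mathcal M\|_\infty$ (induced $\infty$-norm) and $\delta_{app}:=\sup_{k\ge1}\|J^{\mu_k,\nu_k}-\mathcal M J^{\mu_k,\nu_k}\|_\infty$, and suppose $$\kappa:=\alpha^{H-1}+\frac{(\delta_{FV}\alpha^{m+H-1}+\alpha^{H-1})(1+\alpha)}{1-\alpha}<1.$$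 Then for all $k\ge0$, $$\|\Phi\theta_k-J^*\|_\infty\le\kappa^k\|\Phi\theta_0-J^*\|_\infty+\frac{\delta_{app}}{1-\kappa},$$ and hence $\limsup_{k\to\infty}\|\Phi\theta_k-J^*\|_\infty\le\frac{\delta_{app}}{1-\kappa}$.
   Context: A two-player zero-sum discounted Markov game has a finite state space $\mathcal S$, finite action sets $\mathcal U(s)$ (maximizer) and $\mathcal V(s)$ (minimizer) at each state $s$, transition probabilities $P(s'|s,u,v)$, reward $g(s,u,v)\in[0,1]$, and discount factor $\alpha\in(0,1)$. A (stationary randomized) policy pair $(\mu,\nu)$ assigns to each $s$ distributions $\mu(s)\in\Delta(\mathcal U(s))$, $\nu(s)\in\Delta(\mathcal V(s))$. For $V\in\mathbb{R}^{|\mathcal S|}$ and $s\in\mathcal S$ let $A_{V,s}(u,v)=g(s,u,v)+\alpha\sum_{s'}P(s'|s,u,v)V(s')$. Define $T_{\mu,\nu}V(s)=\mu(s)^\top A_{V,s}\nu(s)$ and the Bellman operator $TV(s)=\max_{p\in\Delta(\mathcal U(s))}\min_{q\in\Delta(\mathcal V(s))}p^\top A_{V,s}q$. $J^{\mu,\nu}$ is the unique fixed point of $T_{\mu,\nu}$ and $J^*$ the unique fixed point of $T$ (the Nash equilibrium value). $T^j$, $T^j_{\mu,\nu}$ denote $j$-fold compositions, $T^0$ the identity. *)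

theory Defs
  imports "HOL-Analysis.Analysis"
begin

section \<open>Two-player zero-sum discounted Markov games\<close>

text \<open>Value functions are vectors indexed by the finite state type 's.
  Action sets are given state-wise: Uset s (maximizer), Vset s (minimizer).
  Transition probabilities: Pr s u v s'.  Reward: g s u v.\<close>

definition markov_game ::
  "('s::finite \<Rightarrow> 'u set) \<Rightarrow> ('s \<Rightarrow> 'v set) \<Rightarrow> ('s \<Rightarrow> 'u \<Rightarrow> 'v \<Rightarrow> 's \<Rightarrow> real)
   \<Rightarrow> ('s \<Rightarrow> 'u \<Rightarrow> 'v \<Rightarrow> real) \<Rightarrow> real \<Rightarrow> bool" where
  "markov_game Uset Vset Pr g \<alpha> \<longleftrightarrow>
     0 < \<alpha> \<and> \<alpha> < 1 \<and>
     (\<forall>s. finite (Uset s) \<and> Uset s \<noteq> {} \<and> finite (Vset s) \<and> Vset s \<noteq> {}) \<and>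
     (\<forall>s. \<forall>u\<in>Uset s. \<forall>v\<in>Vset s.
        (\<forall>s'. 0 \<le> Pr s u v s') \<and> (\<Sum>s'\<in>UNIV. Pr s u v s') = 1 \<and>
        0 \<le> g s u v \<and> g s u v \<le> 1)"

text \<open>Probability distributions on a finite set A, as weight functions.\<close>
definition prob_simplex :: "'a set \<Rightarrow> ('a \<Rightarrow> real) set" where
  "prob_simplex A = {p. (\<forall>a. 0 \<le> p a) \<and> (\<forall>a. a \<notin> A \<longrightarrow> p a = 0) \<and> (\<Sum>a\<in>A. p a) = 1}"

text \<open>Stationary randomized policy pair.\<close>
definition policy_pair ::
  "('s \<Rightarrow> 'u set) \<Rightarrow> ('s \<Rightarrow> 'v set) \<Rightarrow> ('s \<Rightarrow> 'u \<Rightarrow> real) \<Rightarrow> ('s \<Rightarrow> 'v \<Rightarrow> real) \<Rightarrow> bool" where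
  "policy_pair Uset Vset \<mu> \<nu> \<longleftrightarrow> (\<forall>s. \<mu> s \<in> prob_simplex (Uset s) \<and> \<nu> s \<in> prob_simplex (Vset s))"

text \<open>The stage matrix A_{V,s}(u,v).\<close>
definition Amat ::
  "('s::finite \<Rightarrow> 'u \<Rightarrow> 'v \<Rightarrow> 's \<Rightarrow> real) \<Rightarrow> ('s \<Rightarrow> 'u \<Rightarrow> 'v \<Rightarrow> real) \<Rightarrow> real
   \<Rightarrow> real^'s \<Rightarrow> 's \<Rightarrow> 'u \<Rightarrow> 'v \<Rightarrow> real" where
  "Amat Pr g \<alpha> J s u v = g s u v + \<alpha> * (\<Sum>s'\<in>UNIV. Pr s u v s' * J $ s')"

text \<open>Bilinear form p^T A q over the action sets at state s.\<close>
definition bilin ::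
  "'u set \<Rightarrow> 'v set \<Rightarrow> ('u \<Rightarrow> real) \<Rightarrow> ('u \<Rightarrow> 'v \<Rightarrow> real) \<Rightarrow> ('v \<Rightarrow> real) \<Rightarrow> real" where
  "bilin U V p A q = (\<Sum>u\<in>U. \<Sum>v\<in>V. p u * A u v * q v)"

text \<open>T_{mu,nu}\<close>
definition Tpol ::
  "('s::finite \<Rightarrow> 'u set) \<Rightarrow> ('s \<Rightarrow> 'v set) \<Rightarrow> ('s \<Rightarrow> 'u \<Rightarrow> 'v \<Rightarrow> 's \<Rightarrow> real)
   \<Rightarrow> ('s \<Rightarrow> 'u \<Rightarrow> 'v \<Rightarrow> real) \<Rightarrow> real
   \<Rightarrow> ('s \<Rightarrow> 'u \<Rightarrow> real) \<Rightarrow> ('s \<Rightarrow> 'v \<Rightarrow> real) \<Rightarrow> real^'s \<Rightarrow> real^'s" where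
  "Tpol Uset Vset Pr g \<alpha> \<mu> \<nu> J =
     (\<chi> s. bilin (Uset s) (Vset s) (\<mu> s) (Amat Pr g \<alpha> J s) (\<nu> s))"

text \<open>Bellman (Shapley) operator T: max over p, min over q.\<close>
definition Tbell ::
  "('s::finite \<Rightarrow> 'u set) \<Rightarrow> ('s \<Rightarrow> 'v set) \<Rightarrow> ('s \<Rightarrow> 'u \<Rightarrow> 'v \<Rightarrow> 's \<Rightarrow> real)
   \<Rightarrow> ('s \<Rightarrow> 'u \<Rightarrow> 'v \<Rightarrow> real) \<Rightarrow> real \<Rightarrow> real^'s \<Rightarrow> real^'s" where
  "Tbell Uset Vset Pr g \<alpha> J =
     (\<chi> s. SUP p\<in>prob_simplex (Uset s). INF q\<in>prob_simplex (Vset s).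
              bilin (Uset s) (Vset s) p (Amat Pr g \<alpha> J s) q)"

text \<open>J^{mu,nu}: the unique fixed point of T_{mu,nu}; J^*: the unique fixed point of T.\<close>
definition Jpol where
  "Jpol Uset Vset Pr g \<alpha> \<mu> \<nu> = (THE J. Tpol Uset Vset Pr g \<alpha> \<mu> \<nu> J = J)"

definition Jstar where
  "Jstar Uset Vset Pr g \<alpha> = (THE J. Tbell Uset Vset Pr g \<alpha> J = J)"

section \<open>Norms\<close>

definition supnorm :: "real^'n::finite \<Rightarrow> real" where
  "supnorm x = (MAX i\<in>UNIV. \<bar>x $ i\<bar>)"

text \<open>Operator norm induced by the infinity norm.\<close>
definition induced_supnorm :: "real^'n::finite^'m::finite \<Rightarrow> real" where
  "induced_supnorm A = (SUP x\<in>{x. supnorm x \<le> 1}. supnorm (A *v x))"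

section \<open>Feature matrix restricted to D\<close>

text \<open>Phi_D, written as an 's x 'd matrix whose rows outside D are zero.
  Then transpose (Phi_D0) ** Phi_D0 = Phi_D^T Phi_D, transpose (Phi_D0) = Phi_D^T P,
  and rank Phi_D0 = rank Phi_D.\<close>
definition restrict_rows :: "'s set \<Rightarrow> real^'d^'s \<Rightarrow> real^'d^'s" where
  "restrict_rows D \<Phi> = (\<chi> s. if s \<in> D then \<Phi> $ s else 0)"

definition Mproj :: "'s::finite set \<Rightarrow> real^'d::finite^'s \<Rightarrow> real^'s^'s" where
  "Mproj D \<Phi> = \<Phi> ** matrix_inv (transpose (restrict_rows D \<Phi>) ** restrict_rows D \<Phi>)
                 ** transpose (restrict_rows D \<Phi>)"

end

theory Submission
  imports Defs
begin

lemma supnorm_ge: "\<bar>x $ i\<bar> \<le> supnorm x"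
  unfolding supnorm_def by (rule Max_ge) auto

lemma supnorm_le_iff: "supnorm x \<le> b \<longleftrightarrow> (\<forall>i. \<bar>x $ i\<bar> \<le> b)"
  unfolding supnorm_def by (subst Max_le_iff) auto

lemma supnorm_nonneg: "0 \<le> supnorm x"
  using supnorm_ge[of x] abs_ge_zero order_trans by blast

lemma supnorm_triangle: "supnorm (x + y) \<le> supnorm x + supnorm y"
  unfolding supnorm_le_iff
  by (metis abs_triangle_ineq add_mono order_trans supnorm_ge vector_add_component)

lemma supnorm_commute: "supnorm (x - y) = supnorm (y - x)"
  unfolding supnorm_def by (simp add: abs_minus_commute)

lemma supnorm_tri_diff: "supnorm (x - z) \<le> supnorm (x - y) + supnorm (y - z)"
  using supnorm_triangle[of "x - y" "y - z"] by simp

lemma supnorm_scale: "supnorm (c *\<^sub>R x) = \<bar>c\<bar> * supnorm x"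
proof (rule antisym)
  show "supnorm (c *\<^sub>R x) \<le> \<bar>c\<bar> * supnorm x"
    unfolding supnorm_le_iff by (simp add: abs_mult mult_left_mono supnorm_ge)
  show "\<bar>c\<bar> * supnorm x \<le> supnorm (c *\<^sub>R x)"
  proof (cases "c = 0")
    case True then show ?thesis by (simp add: supnorm_nonneg)
  next
    case False
    have "\<forall>i. \<bar>c\<bar> * \<bar>x $ i\<bar> \<le> supnorm (c *\<^sub>R x)"
      using supnorm_ge[of "c *\<^sub>R x"] by (simp add: abs_mult)
    then have "\<forall>i. \<bar>x $ i\<bar> \<le> supnorm (c *\<^sub>R x) / \<bar>c\<bar>"
      using False by (simp add: pos_le_divide_eq mult.commute)
    then have "supnorm x \<le> supnorm (c *\<^sub>R x) / \<bar>c\<bar>"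
      unfolding supnorm_le_iff by blast
    then show ?thesis using False by (simp add: pos_le_divide_eq mult.commute)
  qed
qed

lemma supnorm_zero_iff: "supnorm x = 0 \<longleftrightarrow> x = 0"
proof
  assume "supnorm x = 0"
  then have "\<forall>i. \<bar>x $ i\<bar> \<le> 0" by (metis supnorm_ge)
  then show "x = 0" by (simp add: vec_eq_iff)
next
  assume "x = 0" then show "supnorm x = 0" unfolding supnorm_def by simp
qed

lemma supnorm_le_norm: fixes x :: "real^'n::finite" shows "supnorm x \<le> norm x"
proof -
  have "\<forall>i. \<bar>x $ i\<bar> \<le> norm x" by (simp add: component_le_norm_cart)
  then show ?thesis by (simp add: supnorm_le_iff)
qed

lemma norm_le_card_supnorm: "norm (x::real^'n::finite) \<le> real CARD('n) * supnorm x"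
proof -
  have "norm x \<le> (\<Sum>i\<in>UNIV. \<bar>x$i\<bar>)" by (rule norm_le_l1_cart)
  also have "\<dots> \<le> (\<Sum>i\<in>(UNIV::'n set). supnorm x)" by (rule sum_mono) (rule supnorm_ge)
  finally show ?thesis by simp
qed

lemma iter_contr:
  fixes f :: "real^'n::finite \<Rightarrow> real^'n"
  assumes "\<And>x y. supnorm (f x - f y) \<le> c * supnorm (x - y)" "0 \<le> c"
  shows "supnorm ((f^^n) x - (f^^n) y) \<le> c ^ n * supnorm (x - y)"
proof (induction n)
  case 0 then show ?case by (simp add: id_def)
next
  case (Suc n)
  have "supnorm ((f^^Suc n) x - (f^^Suc n) y) \<le> c * supnorm ((f^^n) x - (f^^n) y)"
    using assms(1) by simp
  also have "\<dots> \<le> c * (c ^ n * supnorm (x - y))" using Suc assms(2) by (rule mult_left_mono)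
  finally show ?case by simp
qed

lemma supcontr_fix:
  fixes f :: "real^'n::finite \<Rightarrow> real^'n"
  assumes contr: "\<And>x y. supnorm (f x - f y) \<le> c * supnorm (x - y)" and c: "0 \<le> c" "c < 1"
  shows "\<exists>!x. f x = x"
proof -
  have "0 < 1 / real CARD('n)" by simp
  from real_arch_pow_inv[OF this c(2)] obtain n where "c ^ n < 1 / real CARD('n)" by blast
  then have n: "real CARD('n) * c ^ n < 1" by (simp add: field_simps)
  define F where "F = f^^n"
  have "\<forall>x y. dist (F x) (F y) \<le> (real CARD('n) * c ^ n) * dist x y"
  proof (intro allI)
    fix x y
    have "dist (F x) (F y) = norm (F x - F y)" by (simp add: dist_norm)
    also have "\<dots> \<le> real CARD('n) * supnorm (F x - F y)" by (rule norm_le_card_supnorm)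
    also have "\<dots> \<le> real CARD('n) * (c ^ n * supnorm (x - y))"
      unfolding F_def by (rule mult_left_mono[OF iter_contr[OF contr c(1)]]) simp
    also have "\<dots> \<le> real CARD('n) * (c ^ n * norm (x - y))"
      by (rule mult_left_mono[OF mult_left_mono[OF supnorm_le_norm]]) (use c in auto)
    finally show "dist (F x) (F y) \<le> (real CARD('n) * c ^ n) * dist x y"
      by (simp add: dist_norm mult.assoc)
  qed
  then have "\<exists>!x. F x = x"
    by (rule banach_fix_type[rotated 2]) (use n c in auto)
  then obtain x where x: "F x = x" and xu: "\<And>y. F y = y \<Longrightarrow> y = x"
    by (metis (mono_tags))
  have "F (f x) = f (F x)" unfolding F_def by (simp add: funpow_swap1)
  then have "F (f x) = f x" using x by simp
  then have fx: "f x = x" by (rule xu)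
  show ?thesis
  proof (rule ex1I[of _ x])
    show "f x = x" by (rule fx)
    fix y assume fy: "f y = y"
    have "(f^^k) y = y" for k by (induction k) (simp_all add: fy)
    then have "F y = y" unfolding F_def by simp
    then show "y = x" by (rule xu)
  qed
qed


lemma simplex_ne: assumes "finite A" "A \<noteq> {}" shows "prob_simplex A \<noteq> {}"
proof -
  obtain a where a: "a \<in> A" using assms by blast
  have "(\<lambda>x. if x = a then 1 else 0::real) \<in> prob_simplex A"
    unfolding prob_simplex_def using a assms by (auto simp: sum.delta)
  then show ?thesis by blast
qed

lemma bilin_diff: "bilin U V p A q - bilin U V p B q = bilin U V p (\<lambda>u v. A u v - B u v) q"
  unfolding bilin_def by (simp add: sum_subtractf algebra_simps)

lemma bilin_abs_le:
  assumes p: "p \<in> prob_simplex U" and q: "q \<in> prob_simplex V" and fin: "finite U" "finite V"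
    and C: "\<forall>u\<in>U. \<forall>v\<in>V. \<bar>C u v\<bar> \<le> b"
  shows "\<bar>bilin U V p C q\<bar> \<le> b"
proof -
  have p0: "\<And>u. 0 \<le> p u" and p1: "sum p U = 1" using p by (auto simp: prob_simplex_def)
  have q0: "\<And>v. 0 \<le> q v" and q1: "sum q V = 1" using q by (auto simp: prob_simplex_def)
  have "\<bar>bilin U V p C q\<bar> \<le> (\<Sum>u\<in>U. \<bar>\<Sum>v\<in>V. p u * C u v * q v\<bar>)"
    unfolding bilin_def by (rule sum_abs)
  also have "\<dots> \<le> (\<Sum>u\<in>U. \<Sum>v\<in>V. \<bar>p u * C u v * q v\<bar>)"
    by (rule sum_mono) (rule sum_abs)
  also have "\<dots> \<le> (\<Sum>u\<in>U. \<Sum>v\<in>V. p u * b * q v)"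
  proof (intro sum_mono)
    fix u v assume "u \<in> U" "v \<in> V"
    then have "\<bar>C u v\<bar> \<le> b" using C by blast
    then have "p u * \<bar>C u v\<bar> * q v \<le> p u * b * q v"
      using p0[of u] q0[of v] by (simp add: mult_right_mono mult_left_mono)
    then show "\<bar>p u * C u v * q v\<bar> \<le> p u * b * q v"
      using p0[of u] q0[of v] by (simp add: abs_mult)
  qed
  also have "\<dots> = (\<Sum>u\<in>U. p u * b * (\<Sum>v\<in>V. q v))"
    by (simp add: sum_distrib_left)
  also have "\<dots> = (\<Sum>u\<in>U. p u) * b" using q1 by (simp add: sum_distrib_right)
  also have "\<dots> = b" using p1 by simp
  finally show ?thesis .
qed

lemma game_facts:
  assumes "markov_game Uset Vset Pr g \<alpha>"
  shows "0 < \<alpha>" "\<alpha> < 1" "finite (Uset s)" "Uset s \<noteq> {}" "finite (Vset s)" "Vset s \<noteq> {}"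
    "u \<in> Uset s \<Longrightarrow> v \<in> Vset s \<Longrightarrow> 0 \<le> Pr s u v s'"
    "u \<in> Uset s \<Longrightarrow> v \<in> Vset s \<Longrightarrow> (\<Sum>s'\<in>UNIV. Pr s u v s') = 1"
    "u \<in> Uset s \<Longrightarrow> v \<in> Vset s \<Longrightarrow> 0 \<le> g s u v"
    "u \<in> Uset s \<Longrightarrow> v \<in> Vset s \<Longrightarrow> g s u v \<le> 1"
  using assms unfolding markov_game_def by auto

lemma Amat_diff:
  assumes G: "markov_game Uset Vset Pr g \<alpha>" and uv: "u \<in> Uset s" "v \<in> Vset s"
  shows "\<bar>Amat Pr g \<alpha> J s u v - Amat Pr g \<alpha> J' s u v\<bar> \<le> \<alpha> * supnorm (J - J')"
proof -
  note F = game_facts[OF G]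
  have "Amat Pr g \<alpha> J s u v - Amat Pr g \<alpha> J' s u v = \<alpha> * (\<Sum>s'\<in>UNIV. Pr s u v s' * (J - J') $ s')"
    unfolding Amat_def by (simp add: algebra_simps sum_subtractf)
  also have "\<bar>\<dots>\<bar> = \<alpha> * \<bar>\<Sum>s'\<in>UNIV. Pr s u v s' * (J - J') $ s'\<bar>" using F(1) by (simp add: abs_mult)
  also have "\<dots> \<le> \<alpha> * (\<Sum>s'\<in>UNIV. Pr s u v s' * supnorm (J - J'))"
  proof (intro mult_left_mono)
    have "\<bar>\<Sum>s'\<in>UNIV. Pr s u v s' * (J - J') $ s'\<bar> \<le> (\<Sum>s'\<in>UNIV. \<bar>Pr s u v s' * (J - J') $ s'\<bar>)"
      by (rule sum_abs)
    also have "\<dots> \<le> (\<Sum>s'\<in>UNIV. Pr s u v s' * supnorm (J - J'))"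
    proof (intro sum_mono)
      fix s' show "\<bar>Pr s u v s' * (J - J') $ s'\<bar> \<le> Pr s u v s' * supnorm (J - J')"
        using supnorm_ge[of "J - J'" s'] F(7)[OF uv, of s'] by (simp add: abs_mult mult_left_mono)
    qed
    finally show "\<bar>\<Sum>s'\<in>UNIV. Pr s u v s' * (J - J') $ s'\<bar> \<le> (\<Sum>s'\<in>UNIV. Pr s u v s' * supnorm (J - J'))" .
  qed (use F(1) in simp)
  also have "\<dots> = \<alpha> * supnorm (J - J')" using F(8)[OF uv] by (simp add: sum_distrib_right[symmetric])
  finally show ?thesis .
qed

lemma Amat_bound:
  assumes G: "markov_game Uset Vset Pr g \<alpha>" and uv: "u \<in> Uset s" "v \<in> Vset s"
  shows "\<bar>Amat Pr g \<alpha> J s u v\<bar> \<le> 1 + \<alpha> * supnorm J"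
proof -
  note F = game_facts[OF G]
  have "Amat Pr g \<alpha> J s u v = Amat Pr g \<alpha> J s u v - Amat Pr g \<alpha> 0 s u v + g s u v"
    unfolding Amat_def by simp
  moreover have "\<bar>Amat Pr g \<alpha> J s u v - Amat Pr g \<alpha> 0 s u v\<bar> \<le> \<alpha> * supnorm J"
    using Amat_diff[OF G uv, of J 0] by simp
  moreover have "\<bar>g s u v\<bar> \<le> 1" using F(9,10)[OF uv] by simp
  ultimately show ?thesis by linarith
qed

lemma Tpol_contr:
  assumes G: "markov_game Uset Vset Pr g \<alpha>" and P: "policy_pair Uset Vset \<mu> \<nu>"
  shows "supnorm (Tpol Uset Vset Pr g \<alpha> \<mu> \<nu> J - Tpol Uset Vset Pr g \<alpha> \<mu> \<nu> J') \<le> \<alpha> * supnorm (J - J')"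
  unfolding supnorm_le_iff
proof
  fix s
  note F = game_facts[OF G]
  have "(Tpol Uset Vset Pr g \<alpha> \<mu> \<nu> J - Tpol Uset Vset Pr g \<alpha> \<mu> \<nu> J') $ s
     = bilin (Uset s) (Vset s) (\<mu> s) (\<lambda>u v. Amat Pr g \<alpha> J s u v - Amat Pr g \<alpha> J' s u v) (\<nu> s)"
    unfolding Tpol_def by (simp add: bilin_diff)
  also have "\<bar>\<dots>\<bar> \<le> \<alpha> * supnorm (J - J')"
    using P F by (intro bilin_abs_le Amat_diff[OF G] ballI) (auto simp: policy_pair_def)
  finally show "\<bar>(Tpol Uset Vset Pr g \<alpha> \<mu> \<nu> J - Tpol Uset Vset Pr g \<alpha> \<mu> \<nu> J') $ s\<bar> \<le> \<alpha> * supnorm (J - J')" .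
qed

lemma Tpol_bound:
  assumes G: "markov_game Uset Vset Pr g \<alpha>" and P: "policy_pair Uset Vset \<mu> \<nu>"
  shows "supnorm (Tpol Uset Vset Pr g \<alpha> \<mu> \<nu> J) \<le> 1 + \<alpha> * supnorm J"
  unfolding supnorm_le_iff
proof
  fix s
  note F = game_facts[OF G]
  show "\<bar>Tpol Uset Vset Pr g \<alpha> \<mu> \<nu> J $ s\<bar> \<le> 1 + \<alpha> * supnorm J"
    unfolding Tpol_def using P F
    by (simp, intro bilin_abs_le Amat_bound[OF G] ballI) (auto simp: policy_pair_def)
qed

lemma supinf_diff:
  fixes f g :: "'a \<Rightarrow> 'b \<Rightarrow> real"
  assumes P: "P \<noteq> {}" and Q: "Q \<noteq> {}"
    and bf: "\<forall>p\<in>P. \<forall>q\<in>Q. \<bar>f p q\<bar> \<le> B" and bg: "\<forall>p\<in>P. \<forall>q\<in>Q. \<bar>g p q\<bar> \<le> B"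
    and le: "\<forall>p\<in>P. \<forall>q\<in>Q. f p q \<le> g p q + e"
  shows "(SUP p\<in>P. INF q\<in>Q. f p q) \<le> (SUP p\<in>P. INF q\<in>Q. g p q) + e"
proof -
  have bddf: "bdd_below (f p ` Q)" if "p \<in> P" for p
  proof (rule bdd_belowI[of _ "-B"])
    fix x assume "x \<in> f p ` Q"
    then obtain q where "q \<in> Q" "x = f p q" by blast
    then show "-B \<le> x" using bf that by fastforce
  qed
  have inf_le: "(INF q\<in>Q. f p q) \<le> (INF q\<in>Q. g p q) + e" if p: "p \<in> P" for p
  proof -
    have "(INF q\<in>Q. f p q) - e \<le> (INF q\<in>Q. g p q)"
    proof (rule cINF_greatest[OF Q])
      fix q assume q: "q \<in> Q"
      have "(INF q\<in>Q. f p q) \<le> f p q" by (rule cINF_lower[OF bddf[OF p] q])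
      moreover have "f p q \<le> g p q + e" using le p q by blast
      ultimately show "(INF q\<in>Q. f p q) - e \<le> g p q" by linarith
    qed
    then show ?thesis by simp
  qed
  obtain q0 where q0: "q0 \<in> Q" using Q by blast
  have bddg: "bdd_below (g p ` Q)" if "p \<in> P" for p
  proof (rule bdd_belowI[of _ "-B"])
    fix x assume "x \<in> g p ` Q"
    then obtain q where "q \<in> Q" "x = g p q" by blast
    then show "-B \<le> x" using bg that by fastforce
  qed
  have "bdd_above ((\<lambda>p. INF q\<in>Q. g p q) ` P)"
  proof (intro bdd_aboveI[of _ B])
    fix x assume "x \<in> (\<lambda>p. INF q\<in>Q. g p q) ` P"
    then obtain p where p: "p \<in> P" and x: "x = (INF q\<in>Q. g p q)" by blast
    have "x \<le> g p q0" unfolding x by (rule cINF_lower[OF bddg[OF p] q0])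
    also have "\<dots> \<le> B" using bg p q0 abs_le_iff by blast
    finally show "x \<le> B" .
  qed
  then have "\<And>p. p \<in> P \<Longrightarrow> (INF q\<in>Q. g p q) \<le> (SUP p\<in>P. INF q\<in>Q. g p q)"
    by (rule cSUP_upper2) auto
  then show ?thesis
  proof -
    assume su: "\<And>p. p \<in> P \<Longrightarrow> (INF q\<in>Q. g p q) \<le> (SUP p\<in>P. INF q\<in>Q. g p q)"
    show ?thesis
    proof (rule cSUP_least[OF P])
      fix p assume "p \<in> P"
      from inf_le[OF this] su[OF this] show "(INF q\<in>Q. f p q) \<le> (SUP p\<in>P. INF q\<in>Q. g p q) + e"
        by linarith
    qed
  qed
qed

lemma Tbell_contr:
  assumes G: "markov_game Uset Vset Pr g \<alpha>"
  shows "supnorm (Tbell Uset Vset Pr g \<alpha> J - Tbell Uset Vset Pr g \<alpha> J') \<le> \<alpha> * supnorm (J - J')"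
  unfolding supnorm_le_iff
proof
  fix s
  note F = game_facts[OF G]
  let ?P = "prob_simplex (Uset s)" and ?Q = "prob_simplex (Vset s)"
  let ?f = "\<lambda>p q. bilin (Uset s) (Vset s) p (Amat Pr g \<alpha> J s) q"
  let ?g = "\<lambda>p q. bilin (Uset s) (Vset s) p (Amat Pr g \<alpha> J' s) q"
  let ?B = "1 + \<alpha> * (supnorm J + supnorm J')"
  let ?e = "\<alpha> * supnorm (J - J')"
  have P: "?P \<noteq> {}" using F(3,4) by (rule simplex_ne)
  have Q: "?Q \<noteq> {}" using F(5,6) by (rule simplex_ne)
  have bf: "\<forall>p\<in>?P. \<forall>q\<in>?Q. \<bar>?f p q\<bar> \<le> ?B"
  proof (intro ballI bilin_abs_le)
    fix p q u v assume "u \<in> Uset s" "v \<in> Vset s"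
    then have "\<bar>Amat Pr g \<alpha> J s u v\<bar> \<le> 1 + \<alpha> * supnorm J" by (rule Amat_bound[OF G])
    also have "\<dots> \<le> ?B" using F(1) supnorm_nonneg[of J'] by (simp add: algebra_simps)
    finally show "\<bar>Amat Pr g \<alpha> J s u v\<bar> \<le> ?B" .
  qed (use F in auto)
  have bg: "\<forall>p\<in>?P. \<forall>q\<in>?Q. \<bar>?g p q\<bar> \<le> ?B"
  proof (intro ballI bilin_abs_le)
    fix p q u v assume "u \<in> Uset s" "v \<in> Vset s"
    then have "\<bar>Amat Pr g \<alpha> J' s u v\<bar> \<le> 1 + \<alpha> * supnorm J'" by (rule Amat_bound[OF G])
    also have "\<dots> \<le> ?B" using F(1) supnorm_nonneg[of J] by (simp add: algebra_simps)
    finally show "\<bar>Amat Pr g \<alpha> J' s u v\<bar> \<le> ?B" .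
  qed (use F in auto)
  have d: "\<forall>p\<in>?P. \<forall>q\<in>?Q. \<bar>?f p q - ?g p q\<bar> \<le> ?e"
  proof (intro ballI)
    fix p q assume "p \<in> ?P" "q \<in> ?Q"
    then show "\<bar>?f p q - ?g p q\<bar> \<le> ?e"
      unfolding bilin_diff using F by (intro bilin_abs_le Amat_diff[OF G] ballI) auto
  qed
  have le1: "\<forall>p\<in>?P. \<forall>q\<in>?Q. ?f p q \<le> ?g p q + ?e"
  proof (intro ballI)
    fix p q assume "p \<in> ?P" "q \<in> ?Q"
    with d have "\<bar>?f p q - ?g p q\<bar> \<le> ?e" by blast
    then show "?f p q \<le> ?g p q + ?e" by linarith
  qed
  have le2: "\<forall>p\<in>?P. \<forall>q\<in>?Q. ?g p q \<le> ?f p q + ?e"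
  proof (intro ballI)
    fix p q assume "p \<in> ?P" "q \<in> ?Q"
    with d have "\<bar>?f p q - ?g p q\<bar> \<le> ?e" by blast
    then show "?g p q \<le> ?f p q + ?e" by linarith
  qed
  have 1: "(SUP p\<in>?P. INF q\<in>?Q. ?f p q) \<le> (SUP p\<in>?P. INF q\<in>?Q. ?g p q) + ?e"
    by (rule supinf_diff[OF P Q bf bg le1])
  have 2: "(SUP p\<in>?P. INF q\<in>?Q. ?g p q) \<le> (SUP p\<in>?P. INF q\<in>?Q. ?f p q) + ?e"
    by (rule supinf_diff[OF P Q bg bf le2])
  have "(Tbell Uset Vset Pr g \<alpha> J - Tbell Uset Vset Pr g \<alpha> J') $ s
     = (SUP p\<in>?P. INF q\<in>?Q. ?f p q) - (SUP p\<in>?P. INF q\<in>?Q. ?g p q)"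
    unfolding Tbell_def by simp
  then show "\<bar>(Tbell Uset Vset Pr g \<alpha> J - Tbell Uset Vset Pr g \<alpha> J') $ s\<bar> \<le> ?e"
    using 1 2 by linarith
qed


lemma supnorm_0 [simp]: "supnorm 0 = 0"
  by (simp add: supnorm_zero_iff)

lemma Tbell_iter:
  assumes G: "markov_game Uset Vset Pr g \<alpha>"
  shows "supnorm ((Tbell Uset Vset Pr g \<alpha> ^^ j) x - (Tbell Uset Vset Pr g \<alpha> ^^ j) y) \<le> \<alpha> ^ j * supnorm (x - y)"
  by (rule iter_contr[OF Tbell_contr[OF G]]) (use game_facts(1)[OF G] in simp)

lemma Tpol_iter:
  assumes G: "markov_game Uset Vset Pr g \<alpha>" and P: "policy_pair Uset Vset \<mu> \<nu>"
  shows "supnorm ((Tpol Uset Vset Pr g \<alpha> \<mu> \<nu> ^^ j) x - (Tpol Uset Vset Pr g \<alpha> \<mu> \<nu> ^^ j) y) \<le> \<alpha> ^ j * supnorm (x - y)"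
  by (rule iter_contr[OF Tpol_contr[OF G P]]) (use game_facts(1)[OF G] in simp)

lemma Jstar_fix:
  assumes G: "markov_game Uset Vset Pr g \<alpha>"
  shows "Tbell Uset Vset Pr g \<alpha> (Jstar Uset Vset Pr g \<alpha>) = Jstar Uset Vset Pr g \<alpha>"
proof -
  have "\<exists>!J. Tbell Uset Vset Pr g \<alpha> J = J"
    by (rule supcontr_fix[OF Tbell_contr[OF G]]) (use game_facts(1,2)[OF G] in auto)
  then show ?thesis unfolding Jstar_def by (rule theI')
qed

lemma Jpol_fix:
  assumes G: "markov_game Uset Vset Pr g \<alpha>" and P: "policy_pair Uset Vset \<mu> \<nu>"
  shows "Tpol Uset Vset Pr g \<alpha> \<mu> \<nu> (Jpol Uset Vset Pr g \<alpha> \<mu> \<nu>) = Jpol Uset Vset Pr g \<alpha> \<mu> \<nu>"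
proof -
  have "\<exists>!J. Tpol Uset Vset Pr g \<alpha> \<mu> \<nu> J = J"
    by (rule supcontr_fix[OF Tpol_contr[OF G P]]) (use game_facts(1,2)[OF G] in auto)
  then show ?thesis unfolding Jpol_def by (rule theI')
qed

lemma Jpol_bound:
  assumes G: "markov_game Uset Vset Pr g \<alpha>" and P: "policy_pair Uset Vset \<mu> \<nu>"
  shows "supnorm (Jpol Uset Vset Pr g \<alpha> \<mu> \<nu>) \<le> 1 / (1 - \<alpha>)"
proof -
  let ?J = "Jpol Uset Vset Pr g \<alpha> \<mu> \<nu>"
  have "supnorm ?J \<le> 1 + \<alpha> * supnorm ?J"
    using Tpol_bound[OF G P, of ?J] Jpol_fix[OF G P] by simp
  then have "(1 - \<alpha>) * supnorm ?J \<le> 1" by (simp add: algebra_simps)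
  then show ?thesis using game_facts(2)[OF G] by (simp add: pos_le_divide_eq mult.commute)
qed

lemma matvec_bound:
  fixes A :: "real^'n::finite^'m::finite"
  assumes "supnorm x \<le> 1"
  shows "supnorm (A *v x) \<le> (\<Sum>i\<in>UNIV. \<Sum>j\<in>UNIV. \<bar>A $ i $ j\<bar>)"
  unfolding supnorm_le_iff
proof
  fix i
  have "\<bar>(A *v x) $ i\<bar> = \<bar>\<Sum>j\<in>UNIV. A $ i $ j * x $ j\<bar>" by (simp add: matrix_vector_mult_def)
  also have "\<dots> \<le> (\<Sum>j\<in>UNIV. \<bar>A $ i $ j * x $ j\<bar>)" by (rule sum_abs)
  also have "\<dots> \<le> (\<Sum>j\<in>UNIV. \<bar>A $ i $ j\<bar>)"
  proof (rule sum_mono)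
    fix j
    have "\<bar>x $ j\<bar> \<le> 1" using supnorm_ge[of x j] assms by linarith
    then show "\<bar>A $ i $ j * x $ j\<bar> \<le> \<bar>A $ i $ j\<bar>"
      by (simp add: abs_mult mult_left_le)
  qed
  also have "\<dots> \<le> (\<Sum>i\<in>UNIV. \<Sum>j\<in>UNIV. \<bar>A $ i $ j\<bar>)"
    by (rule member_le_sum) (auto intro: sum_nonneg)
  finally show "\<bar>(A *v x) $ i\<bar> \<le> (\<Sum>i\<in>UNIV. \<Sum>j\<in>UNIV. \<bar>A $ i $ j\<bar>)" .
qed

lemma induced_bdd:
  fixes A :: "real^'n::finite^'m::finite"
  shows "bdd_above ((\<lambda>x. supnorm (A *v x)) ` {x. supnorm x \<le> 1})"
  by (rule bdd_aboveI[of _ "\<Sum>i\<in>UNIV. \<Sum>j\<in>UNIV. \<bar>A $ i $ j\<bar>"]) (auto intro: matvec_bound)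

lemma induced_nonneg:
  fixes A :: "real^'n::finite^'m::finite"
  shows "0 \<le> induced_supnorm A"
proof -
  have "supnorm (A *v 0) \<le> induced_supnorm A"
    unfolding induced_supnorm_def
    by (rule cSUP_upper[OF _ induced_bdd]) (simp add: supnorm_zero_iff)
  then show ?thesis using supnorm_nonneg by (metis order_trans)
qed

lemma induced_bound:
  fixes A :: "real^'n::finite^'m::finite"
  shows "supnorm (A *v x) \<le> induced_supnorm A * supnorm x"
proof (cases "x = 0")
  case True
  then show ?thesis by (simp add: supnorm_zero_iff)
next
  case False
  let ?s = "supnorm x"
  have s: "0 < ?s" using False supnorm_zero_iff supnorm_nonneg by (metis order_le_less)
  let ?y = "(1 / ?s) *\<^sub>R x"
  have "supnorm ?y = 1" using s by (simp add: supnorm_scale)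
  then have "supnorm (A *v ?y) \<le> induced_supnorm A"
    unfolding induced_supnorm_def by (intro cSUP_upper[OF _ induced_bdd]) simp
  moreover have "A *v ?y = (1 / ?s) *\<^sub>R (A *v x)" by (simp add: matrix_vector_mult_scaleR)
  moreover have "supnorm ((1 / ?s) *\<^sub>R (A *v x)) = supnorm (A *v x) / ?s"
    using s by (simp add: supnorm_scale)
  ultimately have "supnorm (A *v x) / ?s \<le> induced_supnorm A" by simp
  then show ?thesis using s by (simp add: pos_divide_le_eq)
qed


lemma inner_matvec: "(A *v z) \<bullet> w = z \<bullet> (transpose A *v (w::real^'m::finite))"
  for A :: "real^'n::finite^'m"
  by (metis dot_lmul_matrix inner_commute transpose_matrix_vector)

lemma restrict_mv: "(restrict_rows D \<Phi> *v z) $ s = (if s \<in> D then (\<Phi> *v z) $ s else 0)"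
  by (simp add: restrict_rows_def matrix_vector_mult_def)

lemma lsq_sol:
  fixes \<Phi> :: "real^'d::finite^'s::finite" and y :: "real^'s" and th :: "real^'d"
  assumes rank: "rank (restrict_rows D \<Phi>) = CARD('d)"
    and min: "\<And>\<theta>'. (\<Sum>s\<in>D. ((\<Phi> *v th) $ s - y $ s)\<^sup>2) \<le> (\<Sum>s\<in>D. ((\<Phi> *v \<theta>') $ s - y $ s)\<^sup>2)"
  shows "\<Phi> *v th = Mproj D \<Phi> *v y"
proof -
  define R where "R = restrict_rows D \<Phi>"
  define yD where "yD = (\<chi> s. if s \<in> D then y $ s else 0)"
  define G where "G = transpose R ** R"
  have injR: "inj ((*v) R)" using rank unfolding R_def by (simp add: full_rank_injective)
  have R0: "R *v z = 0 \<Longrightarrow> z = 0" for z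
    using injR by (metis inj_eq matrix_vector_mult_0_right)
  have G0: "G *v z = 0 \<Longrightarrow> z = 0" for z
  proof -
    assume "G *v z = 0"
    then have "z \<bullet> (transpose R *v (R *v z)) = 0" unfolding G_def by (simp add: matrix_vector_mul_assoc)
    then have "(R *v z) \<bullet> (R *v z) = 0" by (simp add: inner_matvec)
    then show "z = 0" using R0 by simp
  qed
  have "inj ((*v) G)"
  proof (rule injI)
    fix a b assume "G *v a = G *v b"
    then have "G *v (a - b) = 0" by (simp add: matrix_vector_mult_diff_distrib)
    then show "a = b" using G0[of "a - b"] by simp
  qed
  then have "invertible G" by (simp add: invertible_left_inverse matrix_left_invertible_injective)
  then have "G ** matrix_inv G = mat 1 \<and> matrix_inv G ** G = mat 1"
    unfolding invertible_def matrix_inv_def by (rule someI_ex)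
  then have GN: "G ** matrix_inv G = mat 1" by blast
  define N where "N = matrix_inv G"
  define ts where "ts = N *v (transpose R *v yD)"
  have RyD: "transpose R *v yD = transpose R *v y"
    unfolding R_def yD_def
    by (simp add: vec_eq_iff matrix_vector_mult_def restrict_rows_def transpose_def)
       (intro allI sum.cong, auto)
  have f_eq: "(\<Sum>s\<in>D. ((\<Phi> *v t) $ s - y $ s)\<^sup>2) = (R *v t - yD) \<bullet> (R *v t - yD)" for t
  proof -
    have "(R *v t - yD) \<bullet> (R *v t - yD) = (\<Sum>s\<in>UNIV. (if s \<in> D then ((\<Phi> *v t) $ s - y $ s)\<^sup>2 else 0))"
      unfolding inner_vec_def R_def yD_def
      by (intro sum.cong) (auto simp: restrict_mv power2_eq_square)
    also have "\<dots> = (\<Sum>s\<in>D. ((\<Phi> *v t) $ s - y $ s)\<^sup>2)"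
      by (simp add: sum.If_cases)
    finally show ?thesis by simp
  qed
  have ortho: "transpose R *v (R *v ts - yD) = 0"
  proof -
    have "transpose R *v (R *v ts) = G *v ts" unfolding G_def by (simp add: matrix_vector_mul_assoc)
    also have "\<dots> = transpose R *v yD" unfolding ts_def N_def
      by (simp add: matrix_vector_mul_assoc GN)
    finally show ?thesis by (simp add: matrix_vector_mult_diff_distrib)
  qed
  define z where "z = th - ts"
  have decomp: "R *v th - yD = R *v z + (R *v ts - yD)"
    unfolding z_def by (simp add: matrix_vector_mult_diff_distrib)
  have cross: "(R *v z) \<bullet> (R *v ts - yD) = 0"
    by (simp only: inner_matvec ortho inner_zero_right)
  have "(R *v th - yD) \<bullet> (R *v th - yD)
      = (R *v z) \<bullet> (R *v z) + (R *v ts - yD) \<bullet> (R *v ts - yD)"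
    unfolding decomp by (simp add: inner_add_left inner_add_right cross inner_commute[of "R *v ts - yD" "R *v z"])
  moreover have "(R *v th - yD) \<bullet> (R *v th - yD) \<le> (R *v ts - yD) \<bullet> (R *v ts - yD)"
    using min[of ts] unfolding f_eq .
  ultimately have "(R *v z) \<bullet> (R *v z) \<le> 0" by linarith
  then have "R *v z = 0" by (metis inner_eq_zero_iff inner_ge_zero order_antisym)
  then have "z = 0" by (rule R0)
  then have "th = ts" unfolding z_def by simp
  then show ?thesis
    unfolding Mproj_def ts_def N_def G_def R_def[symmetric]
    using RyD by (simp add: matrix_vector_mul_assoc[symmetric])
qed


lemma step_arith:
  fixes \<alpha> a d A \<delta> P :: real
  assumes al: "0 < \<alpha>" "\<alpha> < 1" and a: "0 \<le> a" "a \<le> A" and d: "(1 - \<alpha>) * d \<le> 2 * \<alpha> * a"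
    and dl: "0 \<le> \<delta>" "0 \<le> P"
  shows "\<delta> * P * (a + d) + d \<le> A + (\<delta> * P * A + A) * (1 + \<alpha>) / (1 - \<alpha>)"
proof -
  have pos: "0 < 1 - \<alpha>" using al by simp
  have d1: "d \<le> 2 * \<alpha> * a / (1 - \<alpha>)" using d pos by (simp add: pos_le_divide_eq mult.commute)
  have d2: "2 * \<alpha> * a / (1 - \<alpha>) \<le> 2 * \<alpha> * A / (1 - \<alpha>)"
    using a al pos by (intro divide_right_mono mult_left_mono) auto
  have id1: "a + 2 * \<alpha> * a / (1 - \<alpha>) = a * (1 + \<alpha>) / (1 - \<alpha>)" using pos by (simp add: field_simps)
  have h1: "a + d \<le> A * (1 + \<alpha>) / (1 - \<alpha>)"
  proof -
    have "a + d \<le> a * (1 + \<alpha>) / (1 - \<alpha>)" using d1 id1 by linarith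
    also have "\<dots> \<le> A * (1 + \<alpha>) / (1 - \<alpha>)"
      using a al pos by (intro divide_right_mono mult_right_mono) auto
    finally show ?thesis .
  qed
  have h3: "\<delta> * P * (a + d) \<le> \<delta> * P * (A * (1 + \<alpha>) / (1 - \<alpha>))"
    using h1 dl by (intro mult_left_mono) auto
  have id2: "A + A * (1 + \<alpha>) / (1 - \<alpha>) = 2 * A / (1 - \<alpha>)" using pos by (simp add: field_simps)
  have h4: "2 * \<alpha> * A / (1 - \<alpha>) \<le> 2 * A / (1 - \<alpha>)"
  proof -
    have "\<alpha> * A \<le> 1 * A" using a al by (intro mult_right_mono) auto
    then show ?thesis using pos by (intro divide_right_mono) auto
  qed
  have id3: "A + (\<delta> * P * A + A) * (1 + \<alpha>) / (1 - \<alpha>)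
           = \<delta> * P * (A * (1 + \<alpha>) / (1 - \<alpha>)) + (A + A * (1 + \<alpha>) / (1 - \<alpha>))"
  proof -
    have "(\<delta> * P * A + A) * (1 + \<alpha>) / (1 - \<alpha>) = \<delta> * P * A * (1 + \<alpha>) / (1 - \<alpha>) + A * (1 + \<alpha>) / (1 - \<alpha>)"
      by (simp add: distrib_right add_divide_distrib)
    moreover have "\<delta> * P * A * (1 + \<alpha>) / (1 - \<alpha>) = \<delta> * P * (A * (1 + \<alpha>) / (1 - \<alpha>))"
      by (simp add: mult.assoc)
    ultimately show ?thesis by linarith
  qed
  show ?thesis using h3 d1 d2 h4 id2 id3 by linarith
qed


theorem theorem2:
  fixes Uset :: "'s::finite \<Rightarrow> 'u set" and Vset :: "'s \<Rightarrow> 'v set"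
    and Pr :: "'s \<Rightarrow> 'u \<Rightarrow> 'v \<Rightarrow> 's \<Rightarrow> real" and g :: "'s \<Rightarrow> 'u \<Rightarrow> 'v \<Rightarrow> real"
    and \<alpha> :: real and H m :: nat
    and \<Phi> :: "real^'d::finite^'s" and D :: "'s set"
    and \<theta> :: "nat \<Rightarrow> real^'d"
    and \<mu> :: "nat \<Rightarrow> 's \<Rightarrow> 'u \<Rightarrow> real" and \<nu> :: "nat \<Rightarrow> 's \<Rightarrow> 'v \<Rightarrow> real"
    and \<delta>FV \<delta>app \<kappa> :: real
  assumes game: "markov_game Uset Vset Pr g \<alpha>"
    and H: "H \<ge> 1" and m: "m \<ge> 1"
    and rank: "rank (restrict_rows D \<Phi>) = CARD('d)"
    and pol: "\<And>k. policy_pair Uset Vset (\<mu> (Suc k)) (\<nu> (Suc k))"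
    and greedy: "\<And>k. Tpol Uset Vset Pr g \<alpha> (\<mu> (Suc k)) (\<nu> (Suc k))
                        ((Tbell Uset Vset Pr g \<alpha> ^^ (H - 1)) (\<Phi> *v \<theta> k))
                    = (Tbell Uset Vset Pr g \<alpha> ^^ H) (\<Phi> *v \<theta> k)"
    and lsq: "\<And>k \<theta>'. (\<Sum>s\<in>D. ((\<Phi> *v \<theta> (Suc k)) $ s
                  - ((Tpol Uset Vset Pr g \<alpha> (\<mu> (Suc k)) (\<nu> (Suc k)) ^^ m)
                       ((Tbell Uset Vset Pr g \<alpha> ^^ (H - 1)) (\<Phi> *v \<theta> k))) $ s)\<^sup>2)
               \<le> (\<Sum>s\<in>D. ((\<Phi> *v \<theta>') $ s
                  - ((Tpol Uset Vset Pr g \<alpha> (\<mu> (Suc k)) (\<nu> (Suc k)) ^^ m)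
                       ((Tbell Uset Vset Pr g \<alpha> ^^ (H - 1)) (\<Phi> *v \<theta> k))) $ s)\<^sup>2)"
    and dFV: "\<delta>FV = induced_supnorm (Mproj D \<Phi>)"
    and dapp: "\<delta>app = (SUP k\<in>{1..}. supnorm (Jpol Uset Vset Pr g \<alpha> (\<mu> k) (\<nu> k)
                   - Mproj D \<Phi> *v Jpol Uset Vset Pr g \<alpha> (\<mu> k) (\<nu> k)))"
    and kappa: "\<kappa> = \<alpha> ^ (H - 1) + (\<delta>FV * \<alpha> ^ (m + H - 1) + \<alpha> ^ (H - 1)) * (1 + \<alpha>) / (1 - \<alpha>)"
    and kappa_lt: "\<kappa> < 1"
  shows "(\<forall>k. supnorm (\<Phi> *v \<theta> k - Jstar Uset Vset Pr g \<alpha>)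
            \<le> \<kappa> ^ k * supnorm (\<Phi> *v \<theta> 0 - Jstar Uset Vset Pr g \<alpha>) + \<delta>app / (1 - \<kappa>))
         \<and> limsup (\<lambda>k. ereal (supnorm (\<Phi> *v \<theta> k - Jstar Uset Vset Pr g \<alpha>)))
            \<le> ereal (\<delta>app / (1 - \<kappa>))"
proof -
  let ?T = "Tbell Uset Vset Pr g \<alpha>"
  let ?Tp = "\<lambda>k. Tpol Uset Vset Pr g \<alpha> (\<mu> k) (\<nu> k)"
  let ?Jp = "\<lambda>k. Jpol Uset Vset Pr g \<alpha> (\<mu> k) (\<nu> k)"
  let ?Js = "Jstar Uset Vset Pr g \<alpha>"
  let ?M = "Mproj D \<Phi>"
  define e where "e = (\<lambda>k. supnorm (\<Phi> *v \<theta> k - ?Js))"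
  have a0: "0 < \<alpha>" and a1: "\<alpha> < 1" using game_facts(1,2)[OF game] by auto
  have dFV0: "0 \<le> \<delta>FV" unfolding dFV by (rule induced_nonneg)
  have Mb: "supnorm (?M *v x) \<le> \<delta>FV * supnorm x" for x
    unfolding dFV by (rule induced_bound)
  have Jsfix: "?T ?Js = ?Js" by (rule Jstar_fix[OF game])
  have Jsit: "(?T ^^ j) ?Js = ?Js" for j by (induction j) (simp_all add: Jsfix)
  \<comment> \<open>bound for delta_app\<close>
  have Jdiff_bound: "supnorm (?Jp (Suc k) - ?M *v ?Jp (Suc k)) \<le> (1 + \<delta>FV) * (1 / (1 - \<alpha>))" for k
  proof -
    have jb: "supnorm (?Jp (Suc k)) \<le> 1 / (1 - \<alpha>)" by (rule Jpol_bound[OF game pol])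
    have "supnorm (?Jp (Suc k) - ?M *v ?Jp (Suc k)) \<le> supnorm (?Jp (Suc k)) + supnorm (?M *v ?Jp (Suc k))"
      using supnorm_triangle[of "?Jp (Suc k)" "- (?M *v ?Jp (Suc k))"] supnorm_commute[of 0 "?M *v ?Jp (Suc k)"]
      by simp
    also have "\<dots> \<le> supnorm (?Jp (Suc k)) + \<delta>FV * supnorm (?Jp (Suc k))" using Mb by simp
    also have "\<dots> = (1 + \<delta>FV) * supnorm (?Jp (Suc k))" by (simp add: algebra_simps)
    also have "\<dots> \<le> (1 + \<delta>FV) * (1 / (1 - \<alpha>))" using jb dFV0 by (intro mult_left_mono) auto
    finally show ?thesis .
  qed
  have bddapp: "bdd_above ((\<lambda>k. supnorm (?Jp k - ?M *v ?Jp k)) ` {1..})"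
  proof (rule bdd_aboveI[of _ "(1 + \<delta>FV) * (1 / (1 - \<alpha>))"])
    fix x assume "x \<in> (\<lambda>k. supnorm (?Jp k - ?M *v ?Jp k)) ` {1..}"
    then obtain k where k: "k \<in> {1..}" and x: "x = supnorm (?Jp k - ?M *v ?Jp k)" by blast
    from k obtain k' where "k = Suc k'" by (cases k) auto
    then show "x \<le> (1 + \<delta>FV) * (1 / (1 - \<alpha>))" using x Jdiff_bound by simp
  qed
  have dapp_ge: "supnorm (?Jp (Suc k) - ?M *v ?Jp (Suc k)) \<le> \<delta>app" for k
    unfolding dapp by (rule cSUP_upper[OF _ bddapp]) simp
  have dapp0: "0 \<le> \<delta>app" using dapp_ge[of 0] supnorm_nonneg by (metis order_trans)
  have kappa0: "0 \<le> \<kappa>"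
  proof -
    have "0 \<le> (\<delta>FV * \<alpha> ^ (m + H - 1) + \<alpha> ^ (H - 1)) * (1 + \<alpha>) / (1 - \<alpha>)"
      using a0 a1 dFV0 by (intro divide_nonneg_pos mult_nonneg_nonneg add_nonneg_nonneg) auto
    then show ?thesis unfolding kappa using a0 by simp
  qed
  \<comment> \<open>one-step contraction\<close>
  have step: "e (Suc k) \<le> \<kappa> * e k + \<delta>app" for k
  proof -
    have P: "policy_pair Uset Vset (\<mu> (Suc k)) (\<nu> (Suc k))" by (rule pol)
    define W where "W = (?T ^^ (H - 1)) (\<Phi> *v \<theta> k)"
    define J where "J = ?Jp (Suc k)"
    define a where "a = supnorm (W - ?Js)"
    define d where "d = supnorm (J - ?Js)"
    have Jfix: "?Tp (Suc k) J = J" unfolding J_def by (rule Jpol_fix[OF game P])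
    have Jit: "(?Tp (Suc k) ^^ j) J = J" for j by (induction j) (simp_all add: Jfix)
    have aA: "a \<le> \<alpha> ^ (H - 1) * e k"
      unfolding a_def W_def e_def using Tbell_iter[OF game, of "H - 1" "\<Phi> *v \<theta> k" ?Js] Jsit by simp
    have HH: "(?T ^^ H) (\<Phi> *v \<theta> k) = ?T W"
    proof -
      have "H = Suc (H - 1)" using H by simp
      then have "(?T ^^ H) = ?T \<circ> (?T ^^ (H - 1))" by (metis funpow.simps(2))
      then show ?thesis unfolding W_def by simp
    qed
    have gr: "?Tp (Suc k) W = ?T W" using greedy[of k] HH unfolding W_def by simp
    have "J - ?Js = (?Tp (Suc k) J - ?Tp (Suc k) W) + (?T W - ?T ?Js)"
      using Jfix gr Jsfix by simp
    then have "d \<le> supnorm (?Tp (Suc k) J - ?Tp (Suc k) W) + supnorm (?T W - ?T ?Js)"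
      unfolding d_def by (metis supnorm_triangle)
    also have "\<dots> \<le> \<alpha> * supnorm (J - W) + \<alpha> * a"
      using Tpol_contr[OF game P, of J W] Tbell_contr[OF game, of W ?Js] unfolding a_def by linarith
    finally have d1: "d \<le> \<alpha> * supnorm (J - W) + \<alpha> * a" .
    have JW: "supnorm (J - W) \<le> d + a"
      using supnorm_tri_diff[of J W ?Js] supnorm_commute[of ?Js W] unfolding d_def a_def by simp
    have "\<alpha> * supnorm (J - W) \<le> \<alpha> * (d + a)" by (rule mult_left_mono[OF JW]) (use a0 in simp)
    then have dd: "(1 - \<alpha>) * d \<le> 2 * \<alpha> * a" using d1 by (simp add: algebra_simps)
    \<comment> \<open>least squares\<close>
    have ls: "\<Phi> *v \<theta> (Suc k) = ?M *v ((?Tp (Suc k) ^^ m) W)"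
      unfolding W_def by (rule lsq_sol[OF rank lsq])
    have dec: "\<Phi> *v \<theta> (Suc k) - ?Js = ?M *v ((?Tp (Suc k) ^^ m) W - (?Tp (Suc k) ^^ m) J) + (?M *v J - J) + (J - ?Js)"
      unfolding ls Jit by (simp add: matrix_vector_mult_diff_distrib)
    have t1: "supnorm (?M *v ((?Tp (Suc k) ^^ m) W - (?Tp (Suc k) ^^ m) J)) \<le> \<delta>FV * (\<alpha> ^ m * (a + d))"
    proof -
      have "supnorm ((?Tp (Suc k) ^^ m) W - (?Tp (Suc k) ^^ m) J) \<le> \<alpha> ^ m * supnorm (W - J)"
        by (rule Tpol_iter[OF game P])
      also have "\<dots> \<le> \<alpha> ^ m * (a + d)"
        by (rule mult_left_mono) (use JW supnorm_commute[of W J] a0 in auto)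
      finally have "supnorm ((?Tp (Suc k) ^^ m) W - (?Tp (Suc k) ^^ m) J) \<le> \<alpha> ^ m * (a + d)" .
      then have "\<delta>FV * supnorm ((?Tp (Suc k) ^^ m) W - (?Tp (Suc k) ^^ m) J) \<le> \<delta>FV * (\<alpha> ^ m * (a + d))"
        by (rule mult_left_mono[OF _ dFV0])
      then show ?thesis using Mb[of "(?Tp (Suc k) ^^ m) W - (?Tp (Suc k) ^^ m) J"]
        by (rule order_trans[rotated])
    qed
    have t2: "supnorm (?M *v J - J) \<le> \<delta>app"
      using dapp_ge[of k] supnorm_commute[of "?M *v J" J] unfolding J_def by simp
    have "e (Suc k) \<le> supnorm (?M *v ((?Tp (Suc k) ^^ m) W - (?Tp (Suc k) ^^ m) J)) + supnorm (?M *v J - J) + supnorm (J - ?Js)"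
      unfolding e_def dec
      using supnorm_triangle[of "?M *v ((?Tp (Suc k) ^^ m) W - (?Tp (Suc k) ^^ m) J) + (?M *v J - J)" "J - ?Js"]
        supnorm_triangle[of "?M *v ((?Tp (Suc k) ^^ m) W - (?Tp (Suc k) ^^ m) J)" "?M *v J - J"]
      by linarith
    also have "\<dots> \<le> \<delta>FV * (\<alpha> ^ m * (a + d)) + \<delta>app + d" using t1 t2 unfolding d_def by linarith
    finally have e1: "e (Suc k) \<le> \<delta>FV * \<alpha> ^ m * (a + d) + d + \<delta>app" by (simp add: mult.assoc)
    have a_nn: "0 \<le> a" unfolding a_def by (rule supnorm_nonneg)
    have sa: "\<delta>FV * \<alpha> ^ m * (a + d) + d \<le> \<alpha> ^ (H - 1) * e k + (\<delta>FV * \<alpha> ^ m * (\<alpha> ^ (H - 1) * e k) + \<alpha> ^ (H - 1) * e k) * (1 + \<alpha>) / (1 - \<alpha>)"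
      by (rule step_arith[OF a0 a1 a_nn aA dd dFV0]) (use a0 in simp)
    have pw: "\<alpha> ^ (m + H - 1) = \<alpha> ^ m * \<alpha> ^ (H - 1)"
    proof -
      have "m + H - 1 = m + (H - 1)" using H by simp
      then show ?thesis by (simp add: power_add)
    qed
    have "\<kappa> * e k = \<alpha> ^ (H - 1) * e k + (\<delta>FV * \<alpha> ^ m * (\<alpha> ^ (H - 1) * e k) + \<alpha> ^ (H - 1) * e k) * (1 + \<alpha>) / (1 - \<alpha>)"
      unfolding kappa pw by (simp add: algebra_simps add_divide_distrib)
    then show ?thesis using e1 sa by linarith
  qed
  have main: "e k \<le> \<kappa> ^ k * e 0 + \<delta>app / (1 - \<kappa>)" for k
  proof (induction k)
    case 0
    have "0 \<le> \<delta>app / (1 - \<kappa>)" using dapp0 kappa_lt by simp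
    then show ?case by simp
  next
    case (Suc k)
    have "e (Suc k) \<le> \<kappa> * e k + \<delta>app" by (rule step)
    also have "\<dots> \<le> \<kappa> * (\<kappa> ^ k * e 0 + \<delta>app / (1 - \<kappa>)) + \<delta>app"
      using Suc kappa0 by (simp add: mult_left_mono)
    also have "\<dots> = \<kappa> ^ Suc k * e 0 + \<delta>app / (1 - \<kappa>)"
      using kappa_lt by (simp add: field_simps)
    finally show ?case .
  qed
  have lim: "(\<lambda>k. \<kappa> ^ k * e 0 + \<delta>app / (1 - \<kappa>)) \<longlonglongrightarrow> 0 * e 0 + \<delta>app / (1 - \<kappa>)"
    by (intro tendsto_add tendsto_mult_right LIMSEQ_power_zero tendsto_const) (use kappa0 kappa_lt in simp)
  have "limsup (\<lambda>k. ereal (e k)) \<le> limsup (\<lambda>k. ereal (\<kappa> ^ k * e 0 + \<delta>app / (1 - \<kappa>)))"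
    by (rule Limsup_mono) (use main in simp)
  also have "\<dots> = ereal (\<delta>app / (1 - \<kappa>))"
    by (rule lim_imp_Limsup) (use lim in simp_all)
  finally show ?thesis using main unfolding e_def by blast
qed

end
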